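(* Consider the multi-agent system with $N$ agents, $\mathcal{I}=\{1,\dots,N\}$, where for each $i\in\mathcal{I}$ \[ \dot x_i=-x_i+B_iu_i,\qquad y_i=h_i(x_i,\mathbf{x}_{-i}), \] with $x_i\in\mathbb{R}^{n_i}$, $u_i\in\mathbb{R}^{m_i}$, $B_i\in\mathbb{R}^{n_i\times m_i}$, in closed loop with the full-information control law \[ \dot u_i=-\frac{1}{\tau_i}B_i^\top \nabla_{x_i}h_i(x_i,\mathbf{x}_{-i}),\qquad \tau_i>0,\ i\in\mathcal{I}, \] equivalently $\dot{\mathbf{u}}=-\boldsymbol{\tau}^{-1}\mathbf{B}^\top F_{\mathrm{x}}(\mathbf{x})$ with $\mathbf{B}=\mathrm{diag}(B_1,\dots,B_N)$ and $\boldsymbol{\tau}=\mathrm{diag}(\tau_1 I_{m_1},\dots,\tau_N I_{m_N})$. Suppose Standing Assumptions 1 and 2 (see context) hold. Then there exists $\tau^*>0$ such that, whenever $\min_{i\in\mathcal{I}}\tau_i\ge\tau^*$, every closed-loop solution $(\mathbf{x}(t),\mathbf{u}(t))$ converges to $(\mathbf{x}^*,\mathbf{u}^* )=(\pi(\mathbf{u}^* ),\mathbf{u}^* )$, where $\mathbf{u}^*$ is a Nash equilibrium of the game below (equivalently, the zero of $F$).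
   Context: Notation: $n=\sum_i n_i$, $m=\sum_i m_i$; $\mathbf{x}=(x_1^\top,\dots,x_N^\top)^\top$, $\mathbf{x}_{-i}$ is $\mathbf{x}$ with block $x_i$ removed (similarly $\mathbf{u}$, $\mathbf{u}_{-i}$). Each $h_i:\mathbb{R}^{n_i}\times\mathbb{R}^{n-n_i}\to\mathbb{R}$. Steady-state map: $\pi(\mathbf{u})=(\pi_1(u_1),\dots,\pi_N(u_N))$ with $\pi_i(u_i)=B_iu_i$ (the equilibrium of $\dot x_i=-x_i+B_iu_i$ under constant input $u_i$); $\pi_{-i}(\mathbf{u}_{-i})$ stacks $\pi_j(u_j)$, $j\ne i$. Game: each agent $i$ solves $\min_{u_i\in\mathbb{R}^{m_i}} h_i(\pi_i(u_i),\pi_{-i}(\mathbf{u}_{-i}))$. A Nash equilibrium is $\mathbf{u}^*$ with $h_i(\pi_i(u_i^* ),\pi_{-i}(\mathbf{u}^*_{-i}))\le \inf_{u_i} h_i(\pi_i(u_i),\pi_{-i}(\mathbf{u}^*_{-i}))$ for all $i$. Pseudo-gradients: $F(\mathbf{u})=\big(\nabla_{u_i}h_i(\pi_i(u_i),\pi_{-i}(\mathbf{u}_{-i}))\big)_{i\in\mathcal{I}}\in\mathbb{R}^m$ and $F_{\mathrm{x}}(\mathbf{x})=\big(\nabla_{x_i}h_i(x_i,\mathbf{x}_{-i})\big)_{i\in\mathcal{I}}\in\mathbb{R}^n$. Standing Assumption 1 (Regularity): for each $i$, $h_i$ is differentiable in $x_i$ and $\nabla_{x_i}h_i$ is Lipschitz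 continuous in $(x_i,\mathbf{x}_{-i})$. Standing Assumption 2 (Strong monotonicity): there is $\mu>0$ with $(F(\mathbf{u})-F(\mathbf{v}))^\top(\mathbf{u}-\mathbf{v})\ge\mu\|\mathbf{u}-\mathbf{v}\|^2$ for all $\mathbf{u},\mathbf{v}\in\mathbb{R}^m$. *)

theory Defs
  imports "HOL-Analysis.Analysis"
begin

text \<open>Agents are the elements of a finite type 'i. The stacked state
  x lives in real^'n and the stacked input u in real^'m; the maps ax :: 'n => 'i and
  au :: 'm => 'i assign every coordinate to its agent (block).\<close>

definition block_dirs :: "('k \<Rightarrow> 'i) \<Rightarrow> 'i \<Rightarrow> (real^'k) set" where
  "block_dirs a i = {d. \<forall>k. a k \<noteq> i \<longrightarrow> d $ k = 0}"

definition block_part :: "('k \<Rightarrow> 'i) \<Rightarrow> 'i \<Rightarrow> real^'k \<Rightarrow> real^'k" where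
  "block_part a i v = (\<chi> k. if a k = i then v $ k else 0)"

definition block_diag :: "('n \<Rightarrow> 'i) \<Rightarrow> ('m \<Rightarrow> 'i) \<Rightarrow> real^'m^'n \<Rightarrow> bool" where
  "block_diag ax au B \<longleftrightarrow> (\<forall>k l. ax k \<noteq> au l \<longrightarrow> B $ k $ l = 0)"

text \<open>G is the stacked partial gradient F_x: for every agent i and every x, the map
  x_i |-> h_i(x_i, x_{-i}) is differentiable, with gradient given by the block i
  components of G x.\<close>
definition is_partial_grad ::
  "('n \<Rightarrow> 'i) \<Rightarrow> ('i \<Rightarrow> real^'n \<Rightarrow> real) \<Rightarrow> (real^'n \<Rightarrow> real^'n) \<Rightarrow> bool" where
  "is_partial_grad ax h G \<longleftrightarrow>
     (\<forall>i x. ((\<lambda>d. h i (x + d)) has_derivative (\<lambda>d. block_part ax i (G x) \<bullet> d))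
              (at 0 within block_dirs ax i))"

text \<open>Nash equilibrium of the game min_{u_i} h_i(pi_i(u_i), pi_{-i}(u_{-i})),
  where pi(u) = B u (stacked).\<close>
definition is_nash ::
  "('m \<Rightarrow> 'i) \<Rightarrow> ('i \<Rightarrow> real^'n \<Rightarrow> real) \<Rightarrow> real^'m^'n \<Rightarrow> real^'m \<Rightarrow> bool" where
  "is_nash au h B us \<longleftrightarrow>
     (\<forall>i v. (\<forall>l. au l \<noteq> i \<longrightarrow> v $ l = us $ l) \<longrightarrow> h i (B *v us) \<le> h i (B *v v))"

end

theory Submission
  imports Defs
begin


lemma inner_block:
  assumes "e \<in> block_dirs a i" shows "block_part a i v \<bullet> e = v \<bullet> e"
  using assms unfolding block_dirs_def block_part_def inner_vec_def
  by (intro sum.cong) auto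

lemma block_dirs_scale: "e \<in> block_dirs a i \<Longrightarrow> s *\<^sub>R e \<in> block_dirs a i"
  unfolding block_dirs_def by auto

lemma line_deriv_gen:
  assumes g: "(g has_derivative (\<lambda>d. block_part a i w \<bullet> d)) (at 0 within block_dirs a i)"
    and e: "e \<in> block_dirs a i"
  shows "((\<lambda>s. g (s *\<^sub>R e)) has_real_derivative (w \<bullet> e)) (at 0)"
proof -
  have f: "((\<lambda>s::real. s *\<^sub>R e) has_derivative (\<lambda>s. s *\<^sub>R e)) (at 0 within UNIV)"
    by (auto intro!: derivative_eq_intros)
  have sub: "(\<lambda>s::real. s *\<^sub>R e) ` UNIV \<subseteq> block_dirs a i"
    using block_dirs_scale[OF e] by auto
  have g': "(g has_derivative (\<lambda>d. block_part a i w \<bullet> d)) (at ((\<lambda>s::real. s *\<^sub>R e) 0) within (\<lambda>s::real. s *\<^sub>R e) ` UNIV)"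
    using has_derivative_subset[OF g sub] by simp
  have "((g \<circ> (\<lambda>s::real. s *\<^sub>R e)) has_derivative ((\<lambda>d. block_part a i w \<bullet> d) \<circ> (\<lambda>s. s *\<^sub>R e))) (at 0 within UNIV)"
    by (rule diff_chain_within[OF f g'])
  moreover have "((\<lambda>d. block_part a i w \<bullet> d) \<circ> (\<lambda>s. s *\<^sub>R e)) = (*) (w \<bullet> e)"
    using inner_block[OF e] by (auto simp: fun_eq_iff o_def)
  ultimately show ?thesis unfolding has_field_derivative_def by (simp add: o_def)
qed

lemma Bv_block:
  assumes Bdiag: "block_diag ax au B" and e: "e \<in> block_dirs au i"
  shows "B *v e \<in> block_dirs ax i"
  using assms unfolding block_diag_def block_dirs_def matrix_vector_mult_def
  by (auto intro!: sum.neutral) metis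

lemma F_eq:
  fixes ax :: "'n::finite \<Rightarrow> 'i" and au :: "'m::finite \<Rightarrow> 'i" and B :: "real^'m^'n"
    and F :: "real^'m \<Rightarrow> real^'m" and G :: "real^'n \<Rightarrow> real^'n"
  assumes Bdiag: "block_diag ax au B"
    and Gdef: "is_partial_grad ax h G"
    and Fdef: "\<forall>i u. ((\<lambda>d. h i (B *v (u + d))) has_derivative
                        (\<lambda>d. block_part au i (F u) \<bullet> d)) (at 0 within block_dirs au i)"
  shows "F u = transpose B *v G (B *v u)"
proof (rule vec_eq_iff[THEN iffD2], rule allI)
  fix l
  define i where "i = au l"
  define e :: "real^'m" where "e = axis l 1"
  have e: "e \<in> block_dirs au i" unfolding e_def i_def block_dirs_def axis_def by auto
  have d1: "((\<lambda>s. h i (B *v (u + s *\<^sub>R e))) has_real_derivative (F u \<bullet> e)) (at 0)"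
    using line_deriv_gen[OF Fdef[rule_format, of i u] e] .
  have Be: "B *v e \<in> block_dirs ax i" by (rule Bv_block[OF Bdiag e])
  have d2: "((\<lambda>s. h i (B *v u + s *\<^sub>R (B *v e))) has_real_derivative (G (B *v u) \<bullet> (B *v e))) (at 0)"
    using line_deriv_gen[OF Gdef[unfolded is_partial_grad_def, rule_format, of i "B *v u"] Be] .
  have eq: "(\<lambda>s. h i (B *v (u + s *\<^sub>R e))) = (\<lambda>s. h i (B *v u + s *\<^sub>R (B *v e)))"
    by (simp add: matrix_vector_right_distrib matrix_vector_mult_scaleR)
  have "F u \<bullet> e = G (B *v u) \<bullet> (B *v e)"
    using DERIV_unique[OF d1 d2[folded eq]] .
  moreover have "F u \<bullet> e = F u $ l" unfolding e_def by (simp add: inner_axis)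
  moreover have "G (B *v u) \<bullet> (B *v e) = (transpose B *v G (B *v u)) $ l"
    unfolding e_def inner_vec_def matrix_vector_mult_def transpose_def axis_def
    by (simp add: mult.commute if_distrib cong: if_cong)
  ultimately show "F u $ l = (transpose B *v G (B *v u)) $ l" by simp
qed

lemma nash:
  fixes au :: "'m::finite \<Rightarrow> 'i" and B :: "real^'m^'n::finite"
    and F :: "real^'m \<Rightarrow> real^'m"
  assumes Fdef: "\<forall>i u. ((\<lambda>d. h i (B *v (u + d))) has_derivative
                        (\<lambda>d. block_part au i (F u) \<bullet> d)) (at 0 within block_dirs au i)"
    and mon: "\<forall>u v. (F u - F v) \<bullet> (u - v) \<ge> 0"
    and z: "F us = 0"
  shows "is_nash au h B us"
  unfolding is_nash_def
proof (intro allI impI)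
  fix i v
  assume agree: "\<forall>l. au l \<noteq> i \<longrightarrow> v $ l = us $ l"
  define e where "e = v - us"
  have e: "e \<in> block_dirs au i" using agree unfolding e_def block_dirs_def by auto
  define \<phi> where "\<phi> t = h i (B *v (us + t *\<^sub>R e))" for t
  have der: "(\<phi> has_real_derivative (F (us + t *\<^sub>R e) \<bullet> e)) (at t)" for t
  proof -
    have "((\<lambda>s. h i (B *v ((us + t *\<^sub>R e) + s *\<^sub>R e))) has_real_derivative (F (us + t *\<^sub>R e) \<bullet> e)) (at 0)"
      using line_deriv_gen[OF Fdef[rule_format, of i "us + t *\<^sub>R e"] e] by simp
    moreover have "(\<lambda>s. h i (B *v ((us + t *\<^sub>R e) + s *\<^sub>R e))) = (\<lambda>s. \<phi> (s + t))"
      unfolding \<phi>_def by (simp add: algebra_simps scaleR_add_left)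
    ultimately show ?thesis using DERIV_shift[of \<phi> _ 0 t] by simp
  qed
  have nn: "F (us + t *\<^sub>R e) \<bullet> e \<ge> 0" if "t \<ge> 0" for t
  proof (cases "t = 0")
    case True then show ?thesis using z by simp
  next
    case False
    with that have tp: "t > 0" by simp
    have "(F (us + t *\<^sub>R e) - F us) \<bullet> ((us + t *\<^sub>R e) - us) \<ge> 0" using mon by blast
    then have "t * (F (us + t *\<^sub>R e) \<bullet> e) \<ge> 0" using z by (simp add: inner_diff_left)
    then show ?thesis using tp by (simp add: zero_le_mult_iff)
  qed
  have "\<phi> 0 \<le> \<phi> 1"
    by (rule DERIV_nonneg_imp_nondecreasing[of 0 1]) (use der nn in auto)
  then show "h i (B *v us) \<le> h i (B *v v)" unfolding \<phi>_def e_def by simp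
qed



lemma zero_exists:
  fixes F :: "'a::euclidean_space \<Rightarrow> 'a"
  assumes lipF: "\<forall>u v. norm (F u - F v) \<le> K * norm (u - v)"
    and mu: "\<mu> > 0"
    and mon: "\<forall>u v. (F u - F v) \<bullet> (u - v) \<ge> \<mu> * (norm (u - v))\<^sup>2"
  shows "\<exists>us. F us = 0"
proof -
  define K' where "K' = max K 0 + \<mu>"
  have K'pos: "K' > 0" "K' \<ge> \<mu>" "K' \<ge> K" using mu unfolding K'_def by auto
  define \<alpha> where "\<alpha> = \<mu> / K'\<^sup>2"
  have \<alpha>pos: "\<alpha> > 0" using mu K'pos unfolding \<alpha>_def by auto
  define q where "q = 1 - \<mu>\<^sup>2 / K'\<^sup>2"
  have q01: "0 \<le> q" "q < 1"
  proof -
    have "\<mu>\<^sup>2 \<le> K'\<^sup>2" using K'pos mu by (intro power_mono) auto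
    then show "0 \<le> q" unfolding q_def using K'pos by (simp add: field_simps)
    show "q < 1" unfolding q_def using mu K'pos by simp
  qed
  define T where "T u = u - \<alpha> *\<^sub>R F u" for u
  have key: "(norm (T u - T v))\<^sup>2 \<le> q * (norm (u - v))\<^sup>2" for u v
  proof -
    define d where "d = u - v"
    define f where "f = F u - F v"
    have Td: "T u - T v = d - \<alpha> *\<^sub>R f" unfolding T_def d_def f_def by (simp add: algebra_simps)
    have "(norm (d - \<alpha> *\<^sub>R f))\<^sup>2 = (norm d)\<^sup>2 - 2 * \<alpha> * (f \<bullet> d) + \<alpha>\<^sup>2 * (norm f)\<^sup>2"
      unfolding power2_norm_eq_inner by (simp add: inner_diff_left inner_diff_right inner_commute power2_eq_square algebra_simps)
    also have "\<dots> \<le> (norm d)\<^sup>2 - 2 * \<alpha> * (\<mu> * (norm d)\<^sup>2) + \<alpha>\<^sup>2 * (K'\<^sup>2 * (norm d)\<^sup>2)"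
    proof -
      have "f \<bullet> d \<ge> \<mu> * (norm d)\<^sup>2" using mon unfolding f_def d_def by blast
      moreover have "(norm f)\<^sup>2 \<le> K'\<^sup>2 * (norm d)\<^sup>2"
      proof -
        have "norm f \<le> K' * norm d"
          using lipF[rule_format, of u v] K'pos(3) unfolding f_def d_def
          by (smt (verit, best) mult_right_mono norm_ge_zero)
        then have "(norm f)\<^sup>2 \<le> (K' * norm d)\<^sup>2" by (intro power_mono) auto
        then show ?thesis by (simp add: power_mult_distrib)
      qed
      ultimately show ?thesis using \<alpha>pos
        by (smt (verit, best) mult_left_mono zero_le_power2)
    qed
    also have "\<dots> = q * (norm d)\<^sup>2"
      unfolding q_def \<alpha>_def using K'pos by (simp add: field_simps power2_eq_square)
    finally show ?thesis using Td d_def by simp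
  qed
  have contr: "\<forall>x y. dist (T x) (T y) \<le> sqrt q * dist x y"
  proof (intro allI)
    fix x y
    have "norm (T x - T y) \<le> sqrt (q * (norm (x - y))\<^sup>2)"
      using key[of x y] by (simp add: real_le_rsqrt)
    also have "\<dots> = sqrt q * norm (x - y)" by (simp add: real_sqrt_mult)
    finally show "dist (T x) (T y) \<le> sqrt q * dist x y" by (simp add: dist_norm)
  qed
  have "\<exists>!x. T x = x"
    by (rule banach_fix_type[OF _ _ contr]) (use q01 in auto)
  then obtain x where "T x = x" by blast
  then have "\<alpha> *\<^sub>R F x = 0" unfolding T_def by (simp add: algebra_simps)
  then show ?thesis using \<alpha>pos by auto
qed



lemma block_sum:
  fixes a :: "'k::finite \<Rightarrow> 'i::finite" and v :: "real^'k"
  shows "(\<Sum>i\<in>UNIV. block_part a i v) = v"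
  by (simp add: vec_eq_iff block_part_def if_distrib sum.delta cong: if_cong)

lemma block_part_diff: "block_part a i v - block_part a i w = block_part a i (v - w)"
  by (simp add: vec_eq_iff block_part_def)

lemma G_lip:
  fixes G :: "real^'n::finite \<Rightarrow> real^'n" and ax :: "'n \<Rightarrow> 'i::finite"
  assumes lip: "\<forall>i. \<exists>L. \<forall>x y. norm (block_part ax i (G x) - block_part ax i (G y)) \<le> L * norm (x - y)"
  shows "\<exists>LG\<ge>0. \<forall>x y. norm (G x - G y) \<le> LG * norm (x - y)"
proof -
  obtain L where L: "\<forall>i x y. norm (block_part ax i (G x) - block_part ax i (G y)) \<le> L i * norm (x - y)"
    using lip by metis
  define LG where "LG = (\<Sum>i\<in>UNIV. max (L i) 0)"
  have "LG \<ge> 0" unfolding LG_def by (intro sum_nonneg) auto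
  moreover have "norm (G x - G y) \<le> LG * norm (x - y)" for x y
  proof -
    have "norm (G x - G y) = norm (\<Sum>i\<in>UNIV. block_part ax i (G x - G y))" by (simp add: block_sum)
    also have "\<dots> \<le> (\<Sum>i\<in>UNIV. norm (block_part ax i (G x - G y)))" by (rule norm_sum)
    also have "\<dots> \<le> (\<Sum>i\<in>UNIV. max (L i) 0 * norm (x - y))"
    proof (rule sum_mono)
      fix i
      have "norm (block_part ax i (G x - G y)) \<le> L i * norm (x - y)"
        using L block_part_diff by metis
      also have "\<dots> \<le> max (L i) 0 * norm (x - y)" by (intro mult_right_mono) auto
      finally show "norm (block_part ax i (G x - G y)) \<le> max (L i) 0 * norm (x - y)" .
    qed
    also have "\<dots> = LG * norm (x - y)" unfolding LG_def by (simp add: sum_distrib_right)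
    finally show ?thesis .
  qed
  ultimately show ?thesis by blast
qed



lemma sqrt_exp_lim: assumes "(k::real) > 0" shows "((\<lambda>t. sqrt (A * exp (-k*t))) \<longlongrightarrow> 0) at_top"
proof -
  have f: "filterlim (\<lambda>t. k * t) at_top at_top"
    using assms by (intro filterlim_tendsto_pos_mult_at_top[OF tendsto_const]) (auto simp: filterlim_ident)
  have "filterlim (\<lambda>t. exp (k * t)) at_top at_top"
    by (rule filterlim_compose[OF exp_at_top f])
  then have "((\<lambda>t. inverse (exp (k*t))) \<longlongrightarrow> 0) at_top" by (rule tendsto_inverse_0_at_top)
  then have "((\<lambda>t. exp (-k*t)) \<longlongrightarrow> 0) at_top" by (simp add: exp_minus)
  then have "((\<lambda>t. A * exp (-k*t)) \<longlongrightarrow> 0) at_top" by (rule tendsto_mult_right_zero)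
  then have "((\<lambda>t. sqrt (A * exp (-k*t))) \<longlongrightarrow> sqrt 0) at_top" by (rule tendsto_real_sqrt)
  then show ?thesis by simp
qed
lemma arith_bound:
  fixes \<mu> K c d e w :: real
  assumes mu: "\<mu> > 0" and K: "K > 0" and c: "c = 2 * K\<^sup>2 / \<mu> + 1"
    and d0: "d \<ge> 0" and d1: "d * K \<le> 1/4" and d2: "c * d\<^sup>2 * K\<^sup>2 \<le> \<mu> / 4"
    and e: "e \<ge> 0" and w: "w \<ge> 0"
  shows "- \<mu> * e\<^sup>2 + K * e * w - c * w\<^sup>2 + c * d * K * w\<^sup>2 + c * d * K * w * e
         \<le> - (\<mu> / 2) * e\<^sup>2 - (1/2) * w\<^sup>2"
proof -
  have cpos: "c > 0" using c mu K by (simp add: add_pos_nonneg)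
  have y1: "K * e * w \<le> \<mu>/4 * e\<^sup>2 + K\<^sup>2/\<mu> * w\<^sup>2"
  proof -
    have "0 \<le> (\<mu>/2 * e - K * w)\<^sup>2 / \<mu>" using mu by simp
    also have "\<dots> = \<mu>/4 * e\<^sup>2 + K\<^sup>2/\<mu> * w\<^sup>2 - K * e * w"
      using mu by (simp add: power2_eq_square field_simps)
    finally show ?thesis by simp
  qed
  have y2: "c * d * K * w * e \<le> \<mu>/4 * e\<^sup>2 + (c * d * K)\<^sup>2/\<mu> * w\<^sup>2"
  proof -
    have "0 \<le> (\<mu>/2 * e - c * d * K * w)\<^sup>2 / \<mu>" using mu by simp
    also have "\<dots> = \<mu>/4 * e\<^sup>2 + (c * d * K)\<^sup>2/\<mu> * w\<^sup>2 - c * d * K * w * e"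
      using mu by (simp add: power2_eq_square field_simps)
    finally show ?thesis by simp
  qed
  have y3: "(c * d * K)\<^sup>2/\<mu> \<le> c / 4"
  proof -
    have "(c * d * K)\<^sup>2 = c * (c * d\<^sup>2 * K\<^sup>2)" by (simp add: power2_eq_square)
    also have "\<dots> \<le> c * (\<mu>/4)" using d2 cpos by (intro mult_left_mono) auto
    finally show ?thesis using mu by (simp add: field_simps)
  qed
  have y4: "c * d * K \<le> c / 4" using d1 cpos
    by (metis mult.assoc mult_left_mono less_imp_le divide_inverse mult.commute
        [of c "1/4"] times_divide_eq_right mult_1_right)
  have w2: "w\<^sup>2 \<ge> 0" by simp
  have "(c * d * K)\<^sup>2/\<mu> * w\<^sup>2 \<le> c/4 * w\<^sup>2" using y3 w2 by (rule mult_right_mono)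
  moreover have "c * d * K * w\<^sup>2 \<le> c/4 * w\<^sup>2" using y4 w2 by (rule mult_right_mono)
  moreover have "c * w\<^sup>2 = w\<^sup>2 + 2 * (K\<^sup>2/\<mu> * w\<^sup>2)" using c mu by (simp add: field_simps) (metis distrib_right mult.assoc)
  ultimately show ?thesis using y1 y2 by linarith
qed

lemma lyap:
  fixes B :: "real^'m::finite^'n::finite" and G :: "real^'n \<Rightarrow> real^'n"
    and au :: "'m \<Rightarrow> 'i::finite" and tau :: "'i \<Rightarrow> real"
    and x :: "real \<Rightarrow> real^'n" and u :: "real \<Rightarrow> real^'m" and us :: "real^'m"
  assumes Fz: "transpose B *v G (B *v us) = 0"
    and mon: "\<forall>u v. (transpose B *v G (B *v u) - transpose B *v G (B *v v)) \<bullet> (u - v) \<ge> \<mu> * (norm (u - v))\<^sup>2"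
    and mu: "\<mu> > 0"
    and Glip: "\<forall>x y. norm (G x - G y) \<le> LG * norm (x - y)" and LG: "LG \<ge> 0"
    and bB: "\<forall>v. norm (B *v v) \<le> b * norm v" and b: "b \<ge> 0"
    and bT: "\<forall>v. norm (transpose B *v v) \<le> bt * norm v" and bt: "bt \<ge> 0"
    and K: "K > 0" "K \<ge> bt * LG" "K \<ge> b * (bt * LG)" "K \<ge> b * (b * (bt * LG))"
    and c: "c = 2 * K\<^sup>2 / \<mu> + 1"
    and ts: "ts = 4 * K + 4 * c * K\<^sup>2 / \<mu> + 1"
    and tau: "\<forall>i. tau i \<ge> ts"
    and ode: "\<forall>t\<ge>0. (x has_vector_derivative (- x t + B *v u t)) (at t within {0..}) \<and>
                      (u has_vector_derivative
                          (\<chi> l. - (1 / tau (au l)) * (transpose B *v G (x t)) $ l)) (at t within {0..})"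
  shows "(u \<longlongrightarrow> us) at_top \<and> (x \<longlongrightarrow> B *v us) at_top"
proof -
  define g where "g t = transpose B *v G (x t)" for t
  define ud where "ud t = (\<chi> l. - (1 / tau (au l)) * g t $ l)" for t
  define e where "e t = u t - us" for t
  define z where "z t = x t - B *v u t" for t
  define xd where "xd t = - x t + B *v u t" for t
  define zd where "zd t = xd t - B *v ud t" for t
  define V where "V t = (1/2) * (\<Sum>l\<in>UNIV. tau (au l) * (e t $ l)\<^sup>2) + c/2 * (z t \<bullet> z t)" for t
  define V' where "V' t = (\<Sum>l\<in>UNIV. tau (au l) * (e t $ l * ud t $ l)) + c * (z t \<bullet> zd t)" for t
  have cpos: "c > 0" using c mu K by (simp add: add_pos_nonneg)
  have ts1: "ts \<ge> 1" using ts K mu cpos by (simp add: add_nonneg_nonneg)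
  have tpos: "tau i > 0" for i using tau ts1 by (smt (verit))
  have dV: "(V has_real_derivative V' t) (at t within {0..})" if t: "t \<ge> 0" for t
  proof -
    have dx: "(x has_vector_derivative xd t) (at t within {0..})" using ode t unfolding xd_def by blast
    have du: "(u has_vector_derivative ud t) (at t within {0..})" using ode t unfolding ud_def g_def by blast
    have dul: "((\<lambda>t. u t $ l) has_real_derivative (ud t $ l)) (at t within {0..})" for l
      using bounded_linear.has_vector_derivative[OF bounded_linear_vec_nth du]
      by (simp add: has_real_derivative_iff_has_vector_derivative)
    have dz: "(z has_vector_derivative zd t) (at t within {0..})"
      unfolding z_def[abs_def] zd_def
      by (intro has_vector_derivative_diff dx bounded_linear.has_vector_derivative[OF matrix_vector_mul_bounded_linear] du)
    have dzz: "((\<lambda>t. z t \<bullet> z t) has_real_derivative (2 * (z t \<bullet> zd t))) (at t within {0..})"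
      using bounded_bilinear.has_vector_derivative[OF bounded_bilinear_inner dz dz]
      by (simp add: has_real_derivative_iff_has_vector_derivative inner_commute)
    have del: "((\<lambda>t. tau (au l) * (e t $ l)\<^sup>2) has_real_derivative (2 * (tau (au l) * (e t $ l * ud t $ l)))) (at t within {0..})" for l
      unfolding e_def
      by (rule derivative_eq_intros dul | simp)+
    have dS: "((\<lambda>t. \<Sum>l\<in>UNIV. tau (au l) * (e t $ l)\<^sup>2) has_real_derivative
        (\<Sum>l\<in>UNIV. 2 * (tau (au l) * (e t $ l * ud t $ l)))) (at t within {0..})"
      by (rule DERIV_sum) (rule del)
    have "(V has_real_derivative ((1/2) * (\<Sum>l\<in>UNIV. 2 * (tau (au l) * (e t $ l * ud t $ l))) + c/2 * (2 * (z t \<bullet> zd t)))) (at t within {0..})"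
      unfolding V_def[abs_def] by (intro DERIV_add DERIV_cmult dS dzz)
    moreover have "(1/2) * (\<Sum>l\<in>UNIV. 2 * (tau (au l) * (e t $ l * ud t $ l))) + c/2 * (2 * (z t \<bullet> zd t)) = V' t"
      unfolding V'_def by (simp add: sum_distrib_left[symmetric])
    ultimately show ?thesis by simp
  qed
  define d where "d = 1 / ts"
  have d0: "d \<ge> 0" unfolding d_def using ts1 by simp
  have tinv: "1 / tau i \<le> d" for i unfolding d_def using tau tpos ts1
    by (simp add: frac_le)
  have bndV: "V' t \<le> - (\<mu>/2) * (norm (e t))\<^sup>2 - (1/2) * (norm (z t))\<^sup>2" if t: "t \<ge> 0" for t
  proof -
    define E where "E = norm (e t)"
    define W where "W = norm (z t)"
    define P where "P = bt * LG"
    have E0: "E \<ge> 0" and W0: "W \<ge> 0" unfolding E_def W_def by auto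
    have P0: "P \<ge> 0" unfolding P_def using bt LG by simp
    have S1: "(\<Sum>l\<in>UNIV. tau (au l) * (e t $ l * ud t $ l)) = - (e t \<bullet> g t)"
    proof -
      have "(\<Sum>l\<in>UNIV. tau (au l) * (e t $ l * ud t $ l)) = (\<Sum>l\<in>UNIV. - (e t $ l * g t $ l))"
        unfolding ud_def using tpos by (intro sum.cong) (auto simp: field_simps, metis less_irrefl)
      then show ?thesis by (simp add: inner_vec_def sum_negf)
    qed
    have S2: "e t \<bullet> g t \<ge> \<mu> * E\<^sup>2 - P * E * W"
    proof -
      have gsplit: "g t = transpose B *v (G (x t) - G (B *v u t)) +
          (transpose B *v G (B *v u t) - transpose B *v G (B *v us))"
        unfolding g_def using Fz by (simp add: matrix_vector_mult_diff_distrib)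
      have m: "(transpose B *v G (B *v u t) - transpose B *v G (B *v us)) \<bullet> e t \<ge> \<mu> * E\<^sup>2"
        using mon unfolding E_def e_def by blast
      have "norm (transpose B *v (G (x t) - G (B *v u t))) \<le> bt * norm (G (x t) - G (B *v u t))"
        using bT by blast
      also have "\<dots> \<le> bt * (LG * W)"
        using Glip bt unfolding W_def z_def by (intro mult_left_mono) auto
      finally have nb: "norm (transpose B *v (G (x t) - G (B *v u t))) \<le> P * W" unfolding P_def by simp
      have "\<bar>e t \<bullet> (transpose B *v (G (x t) - G (B *v u t)))\<bar> \<le> E * norm (transpose B *v (G (x t) - G (B *v u t)))"
        unfolding E_def by (rule Cauchy_Schwarz_ineq2)
      also have "\<dots> \<le> E * (P * W)" using nb E0 by (rule mult_left_mono)
      finally have "\<bar>e t \<bullet> (transpose B *v (G (x t) - G (B *v u t)))\<bar> \<le> P * E * W" by (simp add: ac_simps)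
      then show ?thesis using m unfolding gsplit by (simp add: inner_add_right inner_commute)
    qed
    have gnorm: "norm (g t) \<le> P * (W + b * E)"
    proof -
      have "g t = transpose B *v (G (x t) - G (B *v us))"
        unfolding g_def using Fz by (simp add: matrix_vector_mult_diff_distrib)
      then have "norm (g t) \<le> bt * norm (G (x t) - G (B *v us))" using bT by simp
      also have "\<dots> \<le> bt * (LG * norm (x t - B *v us))" using Glip bt by (intro mult_left_mono) auto
      also have "norm (x t - B *v us) \<le> W + b * E"
      proof -
        have "x t - B *v us = z t + B *v e t" unfolding z_def e_def by (simp add: matrix_vector_mult_diff_distrib)
        then have "norm (x t - B *v us) \<le> norm (z t) + norm (B *v e t)" by (simp add: norm_triangle_ineq)
        then show ?thesis using bB unfolding W_def E_def by (smt (verit))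
      qed
      then have "bt * (LG * norm (x t - B *v us)) \<le> bt * (LG * (W + b * E))"
        using bt LG by (intro mult_left_mono) auto
      finally show ?thesis unfolding P_def by (simp add: ac_simps)
    qed
    have udnorm: "norm (ud t) \<le> d * norm (g t)"
    proof -
      have "(norm (ud t))\<^sup>2 \<le> (d * norm (g t))\<^sup>2"
      proof -
        have "(norm (ud t))\<^sup>2 = (\<Sum>l\<in>UNIV. (ud t $ l)\<^sup>2)"
          unfolding power2_norm_eq_inner inner_vec_def by (simp add: power2_eq_square)
        also have "\<dots> \<le> (\<Sum>l\<in>UNIV. d\<^sup>2 * (g t $ l)\<^sup>2)"
        proof (rule sum_mono)
          fix l
          have a: "\<bar>ud t $ l\<bar> \<le> d * \<bar>g t $ l\<bar>"
            unfolding ud_def using tinv[of "au l"] tpos[of "au l"]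
            by (simp add: abs_mult divide_inverse mult.commute) (simp add: mult_right_mono)
          have "(ud t $ l)\<^sup>2 = \<bar>ud t $ l\<bar>\<^sup>2" by simp
          also have "\<dots> \<le> (d * \<bar>g t $ l\<bar>)\<^sup>2" using a by (intro power_mono) auto
          finally show "(ud t $ l)\<^sup>2 \<le> d\<^sup>2 * (g t $ l)\<^sup>2" by (simp add: power_mult_distrib)
        qed
        also have "\<dots> = d\<^sup>2 * (norm (g t))\<^sup>2"
          unfolding power2_norm_eq_inner inner_vec_def by (simp add: power2_eq_square sum_distrib_left)
        also have "\<dots> = (d * norm (g t))\<^sup>2" by (simp add: power_mult_distrib)
        finally show ?thesis .
      qed
      then show ?thesis by (rule power2_le_imp_le) (use d0 in simp)
    qed
    have S3: "z t \<bullet> zd t \<le> - W\<^sup>2 + W * b * (d * (P * (W + b * E)))"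
    proof -
      have zd: "zd t = - z t - B *v ud t" unfolding zd_def xd_def z_def by simp
      have "\<bar>z t \<bullet> (B *v ud t)\<bar> \<le> W * norm (B *v ud t)" unfolding W_def by (rule Cauchy_Schwarz_ineq2)
      also have "\<dots> \<le> W * (b * norm (ud t))" using bB W0 by (intro mult_left_mono) auto
      also have "\<dots> \<le> W * (b * (d * (P * (W + b * E))))"
      proof -
        have "norm (ud t) \<le> d * (P * (W + b * E))"
          using udnorm mult_left_mono[OF gnorm d0] by linarith
        then show ?thesis using W0 b by (intro mult_left_mono) auto
      qed
      finally have "\<bar>z t \<bullet> (B *v ud t)\<bar> \<le> W * b * (d * (P * (W + b * E)))" by (simp add: ac_simps)
      moreover have "z t \<bullet> z t = W\<^sup>2" unfolding W_def by (simp add: power2_norm_eq_inner)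
      ultimately show ?thesis unfolding zd by (simp add: inner_diff_right)
    qed
    have main: "V' t \<le> - \<mu> * E\<^sup>2 + P * E * W - c * W\<^sup>2 + c * d * (b * P) * W\<^sup>2 + c * d * (b * (b * P)) * W * E"
    proof -
      have "V' t = - (e t \<bullet> g t) + c * (z t \<bullet> zd t)" unfolding V'_def S1 by simp
      also have "\<dots> \<le> - (\<mu> * E\<^sup>2 - P * E * W) + c * (- W\<^sup>2 + W * b * (d * (P * (W + b * E))))"
        using S2 S3 cpos by (smt (verit) mult_left_mono)
      also have "\<dots> = - \<mu> * E\<^sup>2 + P * E * W - c * W\<^sup>2 + c * d * (b * P) * W\<^sup>2 + c * d * (b * (b * P)) * W * E"
        by (simp add: algebra_simps power2_eq_square)
      finally show ?thesis .
    qed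
    have cdK: "c * d \<ge> 0" using cpos d0 by simp
    have m1: "P * E * W \<le> K * E * W" using K(2) E0 W0 unfolding P_def by (simp add: mult_right_mono)
    have m2: "c * d * (b * P) * W\<^sup>2 \<le> c * d * K * W\<^sup>2"
      using K(3) cdK unfolding P_def by (intro mult_right_mono mult_left_mono) auto
    have m3: "c * d * (b * (b * P)) * W * E \<le> c * d * K * W * E"
      using K(4) cdK E0 W0 unfolding P_def
      by (metis mult_left_mono mult_nonneg_nonneg mult_right_mono mult.assoc)
    have dK: "d * K \<le> 1/4"
    proof -
      have "4 * K \<le> ts" using ts cpos mu K by (simp add: add_nonneg_nonneg)
      then show ?thesis unfolding d_def using ts1 by (simp add: field_simps)
    qed
    have dK2: "c * d\<^sup>2 * K\<^sup>2 \<le> \<mu> / 4"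
    proof -
      have "4 * c * K\<^sup>2 / \<mu> \<le> ts" using ts K by simp
      also have "ts \<le> ts\<^sup>2" using ts1 by (simp add: power2_eq_square)
      finally have "4 * c * K\<^sup>2 \<le> \<mu> * ts\<^sup>2" using mu by (simp add: field_simps)
      then show ?thesis unfolding d_def using ts1 by (simp add: field_simps power2_eq_square)
    qed
    have "V' t \<le> - \<mu> * E\<^sup>2 + K * E * W - c * W\<^sup>2 + c * d * K * W\<^sup>2 + c * d * K * W * E"
      using main m1 m2 m3 by linarith
    also have "\<dots> \<le> - (\<mu> / 2) * E\<^sup>2 - (1/2) * W\<^sup>2"
      by (rule arith_bound[OF mu K(1) c d0 dK dK2 E0 W0])
    finally show ?thesis unfolding E_def W_def .
  qed
  define tmax where "tmax = Max (range tau)"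
  have tle: "tau i \<le> tmax" for i unfolding tmax_def by (intro Max_ge) auto
  have tmpos: "tmax > 0" using tle[of undefined] tpos[of undefined] by linarith
  define \<kappa> where "\<kappa> = min (\<mu> / tmax) (1 / c)"
  have kpos: "\<kappa> > 0" unfolding \<kappa>_def using mu tmpos cpos by simp
  have k1: "\<kappa> * tmax \<le> \<mu>" unfolding \<kappa>_def using tmpos
    by (metis min.cobounded1 mult_right_mono less_imp_le nonzero_eq_divide_eq order_less_irrefl)
  have k2: "\<kappa> * c \<le> 1" unfolding \<kappa>_def using cpos
    by (metis min.cobounded2 mult_right_mono less_imp_le nonzero_eq_divide_eq order_less_irrefl)
  have sumS: "ts * (norm (e t))\<^sup>2 \<le> (\<Sum>l\<in>UNIV. tau (au l) * (e t $ l)\<^sup>2)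
       \<and> (\<Sum>l\<in>UNIV. tau (au l) * (e t $ l)\<^sup>2) \<le> tmax * (norm (e t))\<^sup>2" for t
  proof -
    have n: "(norm (e t))\<^sup>2 = (\<Sum>l\<in>UNIV. (e t $ l)\<^sup>2)"
      unfolding power2_norm_eq_inner inner_vec_def by (simp add: power2_eq_square)
    have "ts * (\<Sum>l\<in>UNIV. (e t $ l)\<^sup>2) \<le> (\<Sum>l\<in>UNIV. tau (au l) * (e t $ l)\<^sup>2)"
      unfolding sum_distrib_left using tau by (intro sum_mono mult_right_mono) auto
    moreover have "(\<Sum>l\<in>UNIV. tau (au l) * (e t $ l)\<^sup>2) \<le> tmax * (\<Sum>l\<in>UNIV. (e t $ l)\<^sup>2)"
      unfolding sum_distrib_left using tle by (intro sum_mono mult_right_mono) auto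
    ultimately show ?thesis unfolding n by simp
  qed
  have zz: "z t \<bullet> z t = (norm (z t))\<^sup>2" for t by (simp add: power2_norm_eq_inner)
  have Vlow: "ts/2 * (norm (e t))\<^sup>2 \<le> V t \<and> c/2 * (norm (z t))\<^sup>2 \<le> V t" for t
  proof -
    have "ts * (norm (e t))\<^sup>2 \<ge> 0" using ts1 by simp
    moreover have "c * (norm (z t))\<^sup>2 \<ge> 0" using cpos by simp
    ultimately show ?thesis using sumS[of t] unfolding V_def zz by simp
  qed
  have Vup: "V t \<le> tmax/2 * (norm (e t))\<^sup>2 + c/2 * (norm (z t))\<^sup>2" for t
    using sumS[of t] unfolding V_def zz by simp
  have dec: "V' t \<le> - \<kappa> * V t" if "t \<ge> 0" for t
  proof -
    have "\<kappa> * V t \<le> \<kappa> * (tmax/2 * (norm (e t))\<^sup>2 + c/2 * (norm (z t))\<^sup>2)"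
      using Vup kpos by (intro mult_left_mono) auto
    also have "\<dots> = (\<kappa> * tmax)/2 * (norm (e t))\<^sup>2 + (\<kappa> * c)/2 * (norm (z t))\<^sup>2"
      by (simp add: algebra_simps)
    also have "\<dots> \<le> \<mu>/2 * (norm (e t))\<^sup>2 + 1/2 * (norm (z t))\<^sup>2"
      using k1 k2 by (intro add_mono mult_right_mono) auto
    finally show ?thesis using bndV[OF that] by simp
  qed
  define Wf where "Wf t = V t * exp (\<kappa> * t)" for t
  have contV: "continuous_on {0..} V"
    unfolding continuous_on_eq_continuous_within using dV by (auto intro: DERIV_continuous)
  have Wdec: "Wf t \<le> Wf 0" if t: "t \<ge> 0" for t
  proof (rule DERIV_nonpos_imp_decreasing_open[OF t])
    fix s assume s: "0 < s" "s < t"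
    have "(V has_real_derivative V' s) (at s within {0<..})"
      using dV[of s] s by (auto intro: has_field_derivative_subset)
    then have dVs: "(V has_real_derivative V' s) (at s)"
      using at_within_open[of s "{0<..}"] s by simp
    have "(Wf has_real_derivative (V' s * exp (\<kappa> * s) + V s * (exp (\<kappa> * s) * \<kappa>))) (at s)"
      unfolding Wf_def[abs_def] by (auto intro!: derivative_eq_intros dVs)
    moreover have "V' s * exp (\<kappa> * s) + V s * (exp (\<kappa> * s) * \<kappa>) \<le> 0"
    proof -
      have "V' s + \<kappa> * V s \<le> 0" using dec[of s] s by simp
      then have "exp (\<kappa> * s) * (V' s + \<kappa> * V s) \<le> 0" by (simp add: mult_nonneg_nonpos)
      then show ?thesis by (simp add: algebra_simps)
    qed
    ultimately show "\<exists>y. (Wf has_real_derivative y) (at s) \<and> y \<le> 0" by blast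
  next
    show "continuous_on {0..t} Wf"
      unfolding Wf_def by (intro continuous_intros continuous_on_subset[OF contV]) auto
  qed
  have Vexp: "V t \<le> V 0 * exp (- \<kappa> * t)" if "t \<ge> 0" for t
  proof -
    have "V t * exp (\<kappa> * t) \<le> V 0" using Wdec[OF that] unfolding Wf_def by simp
    then have "V t \<le> V 0 / exp (\<kappa> * t)" by (simp add: field_simps)
    then show ?thesis by (simp add: exp_minus field_simps)
  qed
  have elim: "(e \<longlongrightarrow> 0) at_top"
  proof (rule Lim_null_comparison)
    show "\<forall>\<^sub>F t in at_top. norm (e t) \<le> sqrt (2 / ts * V 0 * exp (- \<kappa> * t))"
      using eventually_ge_at_top[of "0::real"]
    proof eventually_elim
      case (elim t)
      have "ts/2 * (norm (e t))\<^sup>2 \<le> V 0 * exp (- \<kappa> * t)" using Vlow[of t] Vexp[OF elim] by linarith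
      then have "(norm (e t))\<^sup>2 \<le> 2 / ts * V 0 * exp (- \<kappa> * t)" using ts1 by (simp add: field_simps)
      then show ?case by (simp add: real_le_rsqrt)
    qed
    show "((\<lambda>t. sqrt (2 / ts * V 0 * exp (- \<kappa> * t))) \<longlongrightarrow> 0) at_top"
      by (rule sqrt_exp_lim[OF kpos])
  qed
  have zlim: "(z \<longlongrightarrow> 0) at_top"
  proof (rule Lim_null_comparison)
    show "\<forall>\<^sub>F t in at_top. norm (z t) \<le> sqrt (2 / c * V 0 * exp (- \<kappa> * t))"
      using eventually_ge_at_top[of "0::real"]
    proof eventually_elim
      case (elim t)
      have "c/2 * (norm (z t))\<^sup>2 \<le> V 0 * exp (- \<kappa> * t)" using Vlow[of t] Vexp[OF elim] by linarith
      then have "(norm (z t))\<^sup>2 \<le> 2 / c * V 0 * exp (- \<kappa> * t)" using cpos by (simp add: field_simps)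
      then show ?case by (simp add: real_le_rsqrt)
    qed
    show "((\<lambda>t. sqrt (2 / c * V 0 * exp (- \<kappa> * t))) \<longlongrightarrow> 0) at_top"
      by (rule sqrt_exp_lim[OF kpos])
  qed
  have ulim: "(u \<longlongrightarrow> us) at_top"
    using elim unfolding e_def[abs_def] by (subst Lim_null) simp
  have "((\<lambda>t. z t + B *v u t) \<longlongrightarrow> 0 + B *v us) at_top"
    by (intro tendsto_add zlim bounded_linear.tendsto[OF matrix_vector_mul_bounded_linear] ulim)
  moreover have "(\<lambda>t. z t + B *v u t) = x" unfolding z_def by auto
  ultimately show ?thesis using ulim by simp
qed


theorem theorem1:
  fixes ax :: "'n::finite \<Rightarrow> 'i::finite"
    and au :: "'m::finite \<Rightarrow> 'i"
    and B :: "real^'m^'n"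
    and h :: "'i \<Rightarrow> real^'n \<Rightarrow> real"
    and G :: "real^'n \<Rightarrow> real^'n"
    and F :: "real^'m \<Rightarrow> real^'m"
  assumes Bdiag: "block_diag ax au B"
    and Gdef: "is_partial_grad ax h G"
    and Fdef: "\<forall>i u. ((\<lambda>d. h i (B *v (u + d))) has_derivative
                        (\<lambda>d. block_part au i (F u) \<bullet> d)) (at 0 within block_dirs au i)"
    and lip: "\<forall>i. \<exists>L. \<forall>x y. norm (block_part ax i (G x) - block_part ax i (G y)) \<le> L * norm (x - y)"
    and mono: "\<exists>\<mu>>0. \<forall>u v. (F u - F v) \<bullet> (u - v) \<ge> \<mu> * (norm (u - v))\<^sup>2"
  shows "\<exists>tau_star>0. \<forall>tau :: 'i \<Rightarrow> real. (\<forall>i. tau i \<ge> tau_star) \<longrightarrow>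
           (\<forall>x :: real \<Rightarrow> real^'n. \<forall>u :: real \<Rightarrow> real^'m.
              (\<forall>t\<ge>0. (x has_vector_derivative (- x t + B *v u t)) (at t within {0..}) \<and>
                      (u has_vector_derivative
                          (\<chi> l. - (1 / tau (au l)) * (transpose B *v G (x t)) $ l)) (at t within {0..}))
              \<longrightarrow> (\<exists>us. is_nash au h B us \<and> (x \<longlongrightarrow> B *v us) at_top \<and> (u \<longlongrightarrow> us) at_top))"
proof -
  obtain \<mu> where mu: "\<mu> > 0" and monF: "\<forall>u v. (F u - F v) \<bullet> (u - v) \<ge> \<mu> * (norm (u - v))\<^sup>2"
    using mono by blast
  have Feq: "\<And>u. F u = transpose B *v G (B *v u)"
    by (rule F_eq[OF Bdiag Gdef Fdef])
  obtain LG where LG: "LG \<ge> 0" and Glip: "\<forall>x y. norm (G x - G y) \<le> LG * norm (x - y)"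
    using G_lip[OF lip] by blast
  obtain b0 where b0: "b0 > 0" "\<forall>v. norm (B *v v) \<le> norm v * b0"
    using bounded_linear.pos_bounded[OF matrix_vector_mul_bounded_linear[of B]] by blast
  obtain bt0 where bt0: "bt0 > 0" "\<forall>v. norm (transpose B *v v) \<le> norm v * bt0"
    using bounded_linear.pos_bounded[OF matrix_vector_mul_bounded_linear[of "transpose B"]] by blast
  have bB: "\<forall>v. norm (B *v v) \<le> b0 * norm v" using b0 by (simp add: mult.commute)
  have bT: "\<forall>v. norm (transpose B *v v) \<le> bt0 * norm v" using bt0 by (simp add: mult.commute)
  have lipF: "\<forall>u v. norm (F u - F v) \<le> (bt0 * LG * b0) * norm (u - v)"
  proof (intro allI)
    fix u v
    have "norm (F u - F v) = norm (transpose B *v (G (B *v u) - G (B *v v)))"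
      by (simp add: Feq matrix_vector_mult_diff_distrib)
    also have "\<dots> \<le> bt0 * norm (G (B *v u) - G (B *v v))" using bT by blast
    also have "\<dots> \<le> bt0 * (LG * norm (B *v u - B *v v))" using Glip bt0 by (intro mult_left_mono) auto
    also have "\<dots> \<le> bt0 * (LG * (b0 * norm (u - v)))"
    proof -
      have "norm (B *v u - B *v v) = norm (B *v (u - v))" by (simp add: matrix_vector_mult_diff_distrib)
      also have "\<dots> \<le> b0 * norm (u - v)" using bB by blast
      finally show ?thesis using bt0 LG by (intro mult_left_mono) auto
    qed
    finally show "norm (F u - F v) \<le> (bt0 * LG * b0) * norm (u - v)" by (simp add: ac_simps)
  qed
  obtain us where Fus: "F us = 0" using zero_exists[OF lipF mu monF] by blast
  have nsh: "is_nash au h B us"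
  proof (rule nash[OF Fdef _ Fus])
    show "\<forall>u v. (F u - F v) \<bullet> (u - v) \<ge> 0"
    proof (intro allI)
      fix u v :: "real^'m"
      have "\<mu> * (norm (u - v))\<^sup>2 \<ge> 0" using mu by simp
      then show "(F u - F v) \<bullet> (u - v) \<ge> 0" using monF by (meson order_trans)
    qed
  qed
  define P where "P = bt0 * LG"
  have P0: "P \<ge> 0" unfolding P_def using bt0 LG by simp
  define K where "K = P * (1 + b0 + b0 * b0) + 1"
  have Kx: "K = 1 + P + b0 * P + b0 * (b0 * P)" unfolding K_def by (simp add: algebra_simps)
  have a: "b0 * P \<ge> 0" using P0 b0 by simp
  have bb: "b0 * (b0 * P) \<ge> 0" using P0 b0 by simp
  have Kq: "K > 0" "K \<ge> P" "K \<ge> b0 * P" "K \<ge> b0 * (b0 * P)"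
    using Kx P0 a bb by linarith+
  note Kp = Kq[unfolded P_def]
  define c where "c = 2 * K\<^sup>2 / \<mu> + 1"
  define ts where "ts = 4 * K + 4 * c * K\<^sup>2 / \<mu> + 1"
  have cpos: "c > 0"
  proof -
    have "2 * K\<^sup>2 / \<mu> \<ge> 0" using mu by simp
    then show ?thesis unfolding c_def by linarith
  qed
  have tspos: "ts > 0"
  proof -
    have "4 * c * K\<^sup>2 / \<mu> \<ge> 0" using mu cpos by simp
    then show ?thesis unfolding ts_def using Kq(1) by linarith
  qed
  show ?thesis
  proof (intro exI[of _ ts] conjI allI impI tspos)
    fix tau :: "'i \<Rightarrow> real" and x :: "real \<Rightarrow> real^'n" and u :: "real \<Rightarrow> real^'m"
    assume tau: "\<forall>i. tau i \<ge> ts"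
    assume ode: "\<forall>t\<ge>0. (x has_vector_derivative (- x t + B *v u t)) (at t within {0..}) \<and>
                      (u has_vector_derivative
                          (\<chi> l. - (1 / tau (au l)) * (transpose B *v G (x t)) $ l)) (at t within {0..})"
    have Fz: "transpose B *v G (B *v us) = 0" using Fus Feq by simp
    have mon': "\<forall>u v. (transpose B *v G (B *v u) - transpose B *v G (B *v v)) \<bullet> (u - v) \<ge> \<mu> * (norm (u - v))\<^sup>2"
      using monF by (simp add: Feq)
    have "(u \<longlongrightarrow> us) at_top \<and> (x \<longlongrightarrow> B *v us) at_top"
      by (rule lyap[OF Fz mon' mu Glip LG bB less_imp_le[OF b0(1)] bT less_imp_le[OF bt0(1)]
            Kp c_def ts_def tau ode])
    then show "\<exists>us. is_nash au h B us \<and> (x \<longlongrightarrow> B *v us) at_top \<and> (u \<longlongrightarrow> us) at_top"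
      using nsh by blast
  qed
qed

end
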